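(* Let $\alpha\in\mathbb{R}$, let $\kappa\in\mathbb{N}_0\cup\{\infty\}$ and let $(s_j)_{j=0}^{\kappa}$ be a sequence of Hermitian complex $q\times q$ matrices. Let $\mathcal{G}$ be a subset of $\mathbb{C}$ with $\mathcal{G}\setminus\mathbb{R}\ne\emptyset$. Further, let $f\colon\mathcal{G}\to\mathbb{C}^{q\times q}$ be a matrix-valued function, let $\mathcal{G}^\vee:=\{z\in\mathbb{C}:\bar z\in\mathcal{G}\}$, and let $f^\vee\colon\mathcal{G}^\vee\to\mathbb{C}^{q\times q}$ be defined by $f^\vee(z):=f^*(\bar z)$. For each $k\in\{-1,0,\dots,\kappa\}$ and each $z\in\mathcal{G}^\vee\setminus\mathbb{R}$, there is a complex $(m_k+2)q\times(m_k+2)q$ matrix $X_k(z)$ such that $P_k^{[f^\vee]}(z)=X_k(z)P_k^{[f]}(\bar z)X_k^*(z)$.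
   Context: Here $m_{-1}$ is understood so that $P_{-1}$ is $q\times q$ (i.e. $(m_{-1}+2)q=q$), and $m_{2k}:=k$, $m_{2k+1}:=k$ for $k\in\mathbb{N}_0$. Notation: $s_{-1}:=0$, $s_{\alpha\triangleright j}:=-\alpha s_j+s_{j+1}$, $H_n:=[s_{j+k}]_{j,k=0}^n$, $H_{\alpha\triangleright n}:=[s_{\alpha\triangleright j+k}]_{j,k=0}^n$, $y_{0,n}:=\operatorname{col}(s_j)_{j=0}^n$, $u_n:=-\operatorname{col}(s_{j-1})_{j=0}^n$, $T_{q,n}:=[\delta_{j,k+1}I_q]_{j,k=0}^n$, $v_{q,n}:=\operatorname{col}(\delta_{j,0}I_q)_{j=0}^n$, $R_{T_{q,n}}(z):=(I_{(n+1)q}-zT_{q,n})^{-1}$. For $z\in\mathcal{G}\setminus\mathbb{R}$: $P_{2n}^{[f]}(z):=\begin{bmatrix}H_n & R_{T_{q,n}}(z)[v_{q,n}f(z)-u_n]\\ (R_{T_{q,n}}(z)[v_{q,n}f(z)-u_n])^* & \frac{f(z)-f^*(z)}{z-\bar z}\end{bmatrix}$ for $2n\le\kappa$; $P_{2n+1}^{[f]}(z):=\begin{bmatrix}H_{\alpha\triangleright n} & B(z)\\ B(z)^* & \frac{(z-\alpha)f(z)-[(z-\alpha)f(z)]^*}{z-\bar z}\end{bmatrix}$ with $B(z):=R_{T_{q,n}}(z)(v_{q,n}(z-\alpha)f(z)-(-\alpha u_n-y_{0,n}))$ for $2n+1\le\kappa$; and $P_{-1}^{[f]}(z):=\frac{(z-\alpha)f(z)-[(z-\alpha)f(z)]^*}{z-\bar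 z}$. *)

theory Defs
  imports "Jordan_Normal_Form.Schur_Decomposition" "Jordan_Normal_Form.Gauss_Jordan_Elimination"
    "HOL-Library.Extended_Nat"
begin

definition blockmat :: "nat \<Rightarrow> nat \<Rightarrow> nat \<Rightarrow> (nat \<Rightarrow> nat \<Rightarrow> complex mat) \<Rightarrow> complex mat" where
  "blockmat r c q B = mat (r*q) (c*q) (\<lambda>(i,j). B (i div q) (j div q) $$ (i mod q, j mod q))"

definition Hmat :: "nat \<Rightarrow> (nat \<Rightarrow> complex mat) \<Rightarrow> nat \<Rightarrow> complex mat" where
  "Hmat q s n = blockmat (n+1) (n+1) q (\<lambda>j k. s (j+k))"

definition salpha :: "real \<Rightarrow> (nat \<Rightarrow> complex mat) \<Rightarrow> nat \<Rightarrow> complex mat" where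
  "salpha \<alpha> s j = (- complex_of_real \<alpha>) \<cdot>\<^sub>m s j + s (j+1)"

definition Halpha :: "nat \<Rightarrow> real \<Rightarrow> (nat \<Rightarrow> complex mat) \<Rightarrow> nat \<Rightarrow> complex mat" where
  "Halpha q \<alpha> s n = blockmat (n+1) (n+1) q (\<lambda>j k. salpha \<alpha> s (j+k))"

definition y0 :: "nat \<Rightarrow> (nat \<Rightarrow> complex mat) \<Rightarrow> nat \<Rightarrow> complex mat" where
  "y0 q s n = blockmat (n+1) 1 q (\<lambda>j _. s j)"

definition sprev :: "nat \<Rightarrow> (nat \<Rightarrow> complex mat) \<Rightarrow> nat \<Rightarrow> complex mat" where
  "sprev q s j = (if j = 0 then 0\<^sub>m q q else s (j - 1))"

definition umat :: "nat \<Rightarrow> (nat \<Rightarrow> complex mat) \<Rightarrow> nat \<Rightarrow> complex mat" where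
  "umat q s n = blockmat (n+1) 1 q (\<lambda>j _. - sprev q s j)"

definition Tmat :: "nat \<Rightarrow> nat \<Rightarrow> complex mat" where
  "Tmat q n = blockmat (n+1) (n+1) q (\<lambda>j k. if j = k+1 then 1\<^sub>m q else 0\<^sub>m q q)"

definition vmat :: "nat \<Rightarrow> nat \<Rightarrow> complex mat" where
  "vmat q n = blockmat (n+1) 1 q (\<lambda>j _. if j = 0 then 1\<^sub>m q else 0\<^sub>m q q)"

definition RT :: "nat \<Rightarrow> nat \<Rightarrow> complex \<Rightarrow> complex mat" where
  "RT q n z = the (mat_inverse (1\<^sub>m ((n+1)*q) - z \<cdot>\<^sub>m Tmat q n))"

(* size (m_k + 2) q of P_k, with m_{2n} = m_{2n+1} = n and (m_{-1}+2) q = q *)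
definition dimP :: "nat \<Rightarrow> int \<Rightarrow> nat" where
  "dimP q k = (if k = -1 then q else (nat k div 2 + 2) * q)"

definition Pmat :: "nat \<Rightarrow> real \<Rightarrow> (nat \<Rightarrow> complex mat) \<Rightarrow> (complex \<Rightarrow> complex mat)
    \<Rightarrow> int \<Rightarrow> complex \<Rightarrow> complex mat" where
  "Pmat q \<alpha> s f k z =
    (if k = -1 then
       (1 / (z - cnj z)) \<cdot>\<^sub>m ((z - complex_of_real \<alpha>) \<cdot>\<^sub>m f z - mat_adjoint ((z - complex_of_real \<alpha>) \<cdot>\<^sub>m f z))
     else if even k then
       (let n = nat k div 2;
            B = RT q n z * (vmat q n * f z - umat q s n)
        in four_block_mat (Hmat q s n) B (mat_adjoint B)
             ((1 / (z - cnj z)) \<cdot>\<^sub>m (f z - mat_adjoint (f z))))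
     else
       (let n = nat k div 2;
            B = RT q n z * (vmat q n * ((z - complex_of_real \<alpha>) \<cdot>\<^sub>m f z)
                   - ((- complex_of_real \<alpha>) \<cdot>\<^sub>m umat q s n - y0 q s n))
        in four_block_mat (Halpha q \<alpha> s n) B (mat_adjoint B)
             ((1 / (z - cnj z)) \<cdot>\<^sub>m ((z - complex_of_real \<alpha>) \<cdot>\<^sub>m f z
                 - mat_adjoint ((z - complex_of_real \<alpha>) \<cdot>\<^sub>m f z)))))"

definition Gvee :: "complex set \<Rightarrow> complex set" where
  "Gvee G = {z. cnj z \<in> G}"

definition fvee :: "(complex \<Rightarrow> complex mat) \<Rightarrow> complex \<Rightarrow> complex mat" where
  "fvee f z = mat_adjoint (f (cnj z))"

end

theory Submission
  imports Defs
begin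

declare minus_carrier_mat[simp]

lemma adj_dim[simp]: "dim_row (mat_adjoint A) = dim_col A" "dim_col (mat_adjoint A) = dim_row A"
  unfolding mat_adjoint_def by auto

lemma adj_carrier[simp]: "(mat_adjoint A \<in> carrier_mat m n) = (A \<in> carrier_mat n m)"
  unfolding carrier_mat_def by auto

lemma adj_carrierI[intro]: "A \<in> carrier_mat n m \<Longrightarrow> mat_adjoint A \<in> carrier_mat m n"
  by simp

lemma adj_index[simp]: "i < dim_col A \<Longrightarrow> j < dim_row A \<Longrightarrow>
   mat_adjoint A $$ (i,j) = cnj (A $$ (j,i))"
  unfolding mat_adjoint_def by (simp add: mat_of_rows_def)

lemma adj_adj[simp]: "mat_adjoint (mat_adjoint (A::complex mat)) = A"
  by (rule eq_matI) auto

lemma adj_mult: "A \<in> carrier_mat n m \<Longrightarrow> B \<in> carrier_mat m p \<Longrightarrow>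
   mat_adjoint (A * B) = mat_adjoint B * mat_adjoint (A :: complex mat)"
  by (rule eq_matI) (auto simp: scalar_prod_def mult.commute)

lemma adj_add: "A \<in> carrier_mat n m \<Longrightarrow> B \<in> carrier_mat n m \<Longrightarrow>
   mat_adjoint (A + B) = mat_adjoint A + mat_adjoint (B :: complex mat)"
  by (rule eq_matI) auto

lemma adj_minus: "A \<in> carrier_mat n m \<Longrightarrow> B \<in> carrier_mat n m \<Longrightarrow>
   mat_adjoint (A - B) = mat_adjoint A - mat_adjoint (B :: complex mat)"
  by (rule eq_matI) auto

lemma adj_smult: "mat_adjoint (c \<cdot>\<^sub>m (A :: complex mat)) = cnj c \<cdot>\<^sub>m mat_adjoint A"
  by (rule eq_matI) auto

lemma adj_one[simp]: "mat_adjoint (1\<^sub>m n :: complex mat) = 1\<^sub>m n"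
  by (rule eq_matI) auto

lemma adj_zero[simp]: "mat_adjoint (0\<^sub>m n m :: complex mat) = 0\<^sub>m m n"
  by (rule eq_matI) auto

lemma adj_four: "A \<in> carrier_mat n1 m1 \<Longrightarrow> B \<in> carrier_mat n1 m2 \<Longrightarrow> C \<in> carrier_mat n2 m1
  \<Longrightarrow> D \<in> carrier_mat n2 m2 \<Longrightarrow>
  mat_adjoint (four_block_mat A B C D) = four_block_mat (mat_adjoint A) (mat_adjoint C) (mat_adjoint B) (mat_adjoint (D :: complex mat))"
  by (rule eq_matI) (auto simp: four_block_mat_def)

lemma smult_smult_mat: "k \<cdot>\<^sub>m (l \<cdot>\<^sub>m (A::complex mat)) = (k * l) \<cdot>\<^sub>m A"
  by (rule eq_matI) auto

lemma aux: assumes h: "(x::complex) - y = p - r" shows "x = y + p - r"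
proof -
  have "x = (x - y) + y" by simp
  also have "\<dots> = (p - r) + y" using h by simp
  finally show ?thesis by (simp add: algebra_simps)
qed

lemma L1: "H \<in> carrier_mat N m \<Longrightarrow> T \<in> carrier_mat N N \<Longrightarrow>
   (1\<^sub>m N - c \<cdot>\<^sub>m T) * H = H - c \<cdot>\<^sub>m (T * (H :: complex mat))"
  by (subst minus_mult_distrib_mat[of _ N N]) (auto simp: mult_smult_assoc_mat)

lemma L2: "H \<in> carrier_mat m N \<Longrightarrow> T \<in> carrier_mat N N \<Longrightarrow>
   H * (1\<^sub>m N - c \<cdot>\<^sub>m T) = H - c \<cdot>\<^sub>m (H * (T :: complex mat))"
  by (subst mult_minus_distrib_mat[of _ m N]) (auto simp: mult_smult_distrib)

lemma S1: assumes R: "R \<in> carrier_mat N N" and K: "K \<in> carrier_mat N N" and Y: "Y \<in> carrier_mat N N"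
  shows "R * K * Y * mat_adjoint (R * K) = R * (K * Y * mat_adjoint K) * mat_adjoint (R :: complex mat)"
proof -
  have aK: "mat_adjoint K \<in> carrier_mat N N" and aR: "mat_adjoint R \<in> carrier_mat N N" using R K by auto
  have "R * K * Y * mat_adjoint (R * K) = R * K * Y * (mat_adjoint K * mat_adjoint R)"
    by (simp add: adj_mult[OF R K])
  also have "\<dots> = R * (K * Y * mat_adjoint K) * mat_adjoint R"
    using R K Y aK aR by (simp add: assoc_mult_mat[of _ N N _ N _ N])
  finally show ?thesis .
qed

lemma S2: assumes R: "R \<in> carrier_mat N N" and v: "v \<in> carrier_mat N q" and w: "w \<in> carrier_mat N q"
  shows "(c \<cdot>\<^sub>m (R * v)) * mat_adjoint (R * w) = R * (c \<cdot>\<^sub>m (v * mat_adjoint w)) * mat_adjoint (R :: complex mat)"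
proof -
  have aw: "mat_adjoint w \<in> carrier_mat q N" and aR: "mat_adjoint R \<in> carrier_mat N N" using R w by auto
  have "(c \<cdot>\<^sub>m (R * v)) * mat_adjoint (R * w) = c \<cdot>\<^sub>m (R * v * (mat_adjoint w * mat_adjoint R))"
    using R v aw aR by (simp add: adj_mult[OF R w] mult_smult_assoc_mat[OF mult_carrier_mat[OF R v] mult_carrier_mat[OF aw aR]])
  also have "\<dots> = c \<cdot>\<^sub>m (R * (v * mat_adjoint w) * mat_adjoint R)"
    using R v aw aR by (simp add: assoc_mult_mat[OF R v mult_carrier_mat[OF aw aR]]
       assoc_mult_mat[OF R mult_carrier_mat[OF v aw] aR] assoc_mult_mat[OF v aw aR])
  also have "\<dots> = R * (c \<cdot>\<^sub>m (v * mat_adjoint w)) * mat_adjoint R"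
    using R v aw aR by (simp add: mult_smult_distrib[OF R mult_carrier_mat[OF v aw]] 
        mult_smult_assoc_mat[OF mult_carrier_mat[OF R mult_carrier_mat[OF v aw]] aR])
  finally show ?thesis .
qed

lemma S3: assumes R: "R \<in> carrier_mat N N" and v: "v \<in> carrier_mat N q" and w: "w \<in> carrier_mat N q"
  shows "(R * w) * mat_adjoint (c \<cdot>\<^sub>m (R * v)) = R * (cnj c \<cdot>\<^sub>m (w * mat_adjoint v)) * mat_adjoint (R :: complex mat)"
proof -
  have av: "mat_adjoint v \<in> carrier_mat q N" and aR: "mat_adjoint R \<in> carrier_mat N N" using R v by auto
  have "(R * w) * mat_adjoint (c \<cdot>\<^sub>m (R * v)) = cnj c \<cdot>\<^sub>m (R * w * (mat_adjoint v * mat_adjoint R))"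
    using R w av aR by (simp add: adj_smult adj_mult[OF R v] mult_smult_distrib[OF mult_carrier_mat[OF R w] mult_carrier_mat[OF av aR]])
  also have "\<dots> = cnj c \<cdot>\<^sub>m (R * (w * mat_adjoint v) * mat_adjoint R)"
    using R w av aR by (simp add: assoc_mult_mat[OF R w mult_carrier_mat[OF av aR]]
       assoc_mult_mat[OF R mult_carrier_mat[OF w av] aR] assoc_mult_mat[OF w av aR])
  also have "\<dots> = R * (cnj c \<cdot>\<^sub>m (w * mat_adjoint v)) * mat_adjoint R"
    using R w av aR by (simp add: mult_smult_distrib[OF R mult_carrier_mat[OF w av]] 
        mult_smult_assoc_mat[OF mult_carrier_mat[OF R mult_carrier_mat[OF w av]] aR])
  finally show ?thesis .
qed

lemma S4: assumes R: "R \<in> carrier_mat N N" and Y1: "Y1 \<in> carrier_mat N N" and Y2: "Y2 \<in> carrier_mat N N"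
  and Y3: "Y3 \<in> carrier_mat N N"
  shows "R * Y1 * mat_adjoint R + R * Y2 * mat_adjoint R + R * Y3 * mat_adjoint R = R * (Y1 + Y2 + Y3) * mat_adjoint (R :: complex mat)"
  using R Y1 Y2 Y3 apply (simp add: mult_add_distrib_mat[of _ N N] add_mult_distrib_mat[of _ N N])
  apply (rule eq_matI) using R Y1 Y2 Y3 by auto

lemma key:
  fixes H T R1 R2 v u a :: "complex mat" and z :: complex
  assumes H: "H \<in> carrier_mat N N" and T: "T \<in> carrier_mat N N"
    and R1: "R1 \<in> carrier_mat N N" and R2: "R2 \<in> carrier_mat N N"
    and v: "v \<in> carrier_mat N q" and u: "u \<in> carrier_mat N q" and a: "a \<in> carrier_mat q q"
    and R1E: "R1 * (1\<^sub>m N - z \<cdot>\<^sub>m T) = 1\<^sub>m N"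
    and R2M: "(1\<^sub>m N - cnj z \<cdot>\<^sub>m T) * R2 = 1\<^sub>m N"
    and HT: "T * H - H * mat_adjoint T = v * mat_adjoint u - u * mat_adjoint v"
    and zr: "z \<noteq> cnj z"
  shows "four_block_mat H (R1 * (v * mat_adjoint a - u)) (mat_adjoint (R1 * (v * mat_adjoint a - u)))
            ((1 / (z - cnj z)) \<cdot>\<^sub>m (mat_adjoint a - a))
    = four_block_mat (R1 * (1\<^sub>m N - cnj z \<cdot>\<^sub>m T)) ((z - cnj z) \<cdot>\<^sub>m (R1 * v)) (0\<^sub>m q N) (1\<^sub>m q)
      * four_block_mat H (R2 * (v * a - u)) (mat_adjoint (R2 * (v * a - u)))
            ((1 / (cnj z - z)) \<cdot>\<^sub>m (a - mat_adjoint a))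
      * mat_adjoint (four_block_mat (R1 * (1\<^sub>m N - cnj z \<cdot>\<^sub>m T)) ((z - cnj z) \<cdot>\<^sub>m (R1 * v)) (0\<^sub>m q N) (1\<^sub>m q))"
proof -
  define c where "c = z - cnj z"
  define M where "M = 1\<^sub>m N - cnj z \<cdot>\<^sub>m T"
  define E where "E = 1\<^sub>m N - z \<cdot>\<^sub>m T"
  define A where "A = R1 * M"
  define D where "D = c \<cdot>\<^sub>m (R1 * v)"
  define W where "W = v * a - u"
  define W' where "W' = v * mat_adjoint a - u"
  define B where "B = R2 * W"
  define B' where "B' = R1 * W'"
  define C where "C = (1 / (cnj z - z)) \<cdot>\<^sub>m (a - mat_adjoint a)"
  have c0: "c \<noteq> 0" using zr by (simp add: c_def)
  have cc: "cnj c = - c" by (simp add: c_def)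
  have M: "M \<in> carrier_mat N N" and E: "E \<in> carrier_mat N N" using T by (auto simp: M_def E_def)
  have A: "A \<in> carrier_mat N N" using R1 M by (auto simp: A_def)
  have D: "D \<in> carrier_mat N q" using R1 v by (auto simp: D_def)
  have W: "W \<in> carrier_mat N q" and W': "W' \<in> carrier_mat N q" using v a u by (auto simp: W_def W'_def)
  have B: "B \<in> carrier_mat N q" and B': "B' \<in> carrier_mat N q" using R1 R2 W W' by (auto simp: B_def B'_def)
  have C: "C \<in> carrier_mat q q" using a by (auto simp: C_def)
  have Rv: "R1 * v \<in> carrier_mat N q" using R1 v by auto
  have aa: "a - mat_adjoint a \<in> carrier_mat q q" using a by auto
  have vaa: "v * (a - mat_adjoint a) \<in> carrier_mat N q" using v aa by auto
  have svaa: "(-1) \<cdot>\<^sub>m (v * (a - mat_adjoint a)) \<in> carrier_mat N q" using vaa by auto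
  have C': "(1 / (z - cnj z)) \<cdot>\<^sub>m (mat_adjoint a - a) = C"
  proof (rule eq_matI)
    fix i j assume "i < dim_row C" "j < dim_col C"
    then have ij: "i < q" "j < q" using C by auto
    have e: "(x - y) / (w1 - w2) = (y - x) / (w2 - w1)" for x y w1 w2 :: complex
      by (metis minus_diff_eq minus_divide_divide)
    show "(1 / (z - cnj z) \<cdot>\<^sub>m (mat_adjoint a - a)) $$ (i, j) = C $$ (i, j)"
      using a ij by (simp add: C_def) (rule e)
  qed (use a C in auto)
  have Cadj: "mat_adjoint C = C"
    unfolding C_def adj_smult using a C' by (subst adj_minus[of _ q q]) (auto simp: C_def)
  have AB: "A * B = R1 * W"
  proof -
    have "A * B = R1 * ((M * R2) * W)" unfolding A_def B_def using R1 M R2 W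
      by (simp add: assoc_mult_mat[of _ N N _ N _ q])
    also have "\<dots> = R1 * W" using R2M W by (simp add: M_def)
    finally show ?thesis .
  qed
  have DC: "D * C = (-1) \<cdot>\<^sub>m (R1 * (v * (a - mat_adjoint a)))"
  proof -
    have "D * C = (c * (1 / (cnj z - z))) \<cdot>\<^sub>m ((R1 * v) * (a - mat_adjoint a))"
      unfolding D_def C_def
      apply (subst mult_smult_assoc_mat[OF Rv C[unfolded C_def]])
      apply (subst mult_smult_distrib[OF Rv aa])
      apply (simp add: smult_smult_mat)
      done
    also have "c * (1 / (cnj z - z)) = -1" using c0 by (simp add: c_def field_simps)
    finally show ?thesis by (simp add: assoc_mult_mat[OF R1 v aa])
  qed
  have TR: "A * B + D * C = B'"
  proof -
    have "A * B + D * C = R1 * W + R1 * ((-1) \<cdot>\<^sub>m (v * (a - mat_adjoint a)))"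
      unfolding AB DC by (simp add: mult_smult_distrib[OF R1 vaa])
    also have "\<dots> = R1 * (W + (-1) \<cdot>\<^sub>m (v * (a - mat_adjoint a)))"
      by (simp add: mult_add_distrib_mat[OF R1 W svaa])
    also have "W + (-1) \<cdot>\<^sub>m (v * (a - mat_adjoint a)) = W'"
      unfolding W_def W'_def using v a u
      by (subst mult_minus_distrib_mat[of _ N q]) (auto intro!: eq_matI)
    finally show ?thesis by (simp add: B'_def)
  qed
  have aT: "mat_adjoint T \<in> carrier_mat N N" using T by simp
  have TH: "T * H \<in> carrier_mat N N" using T H by simp
  have HaT: "H * mat_adjoint T \<in> carrier_mat N N" using aT H by simp
  have THaT: "T * H * mat_adjoint T \<in> carrier_mat N N" using aT TH by simp
  have aM: "mat_adjoint M = 1\<^sub>m N - z \<cdot>\<^sub>m mat_adjoint T"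
    unfolding M_def using T by (subst adj_minus[of _ N N]) (auto simp: adj_smult)
  have aE: "mat_adjoint E = 1\<^sub>m N - cnj z \<cdot>\<^sub>m mat_adjoint T"
    unfolding E_def using T by (subst adj_minus[of _ N N]) (auto simp: adj_smult)
  have MH: "M * H * mat_adjoint M = H - cnj z \<cdot>\<^sub>m (T * H) - z \<cdot>\<^sub>m (H * mat_adjoint T - cnj z \<cdot>\<^sub>m (T * H * mat_adjoint T))"
  proof -
    have 1: "M * H = H - cnj z \<cdot>\<^sub>m (T * H)" unfolding M_def by (rule L1[OF H T])
    have 2: "H - cnj z \<cdot>\<^sub>m (T * H) \<in> carrier_mat N N" using H TH by simp
    have 3: "(H - cnj z \<cdot>\<^sub>m (T * H)) * mat_adjoint T = H * mat_adjoint T - cnj z \<cdot>\<^sub>m (T * H * mat_adjoint T)"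
      using H TH aT by (simp add: minus_mult_distrib_mat[of _ N N] mult_smult_assoc_mat[OF TH aT])
    show ?thesis unfolding 1 aM L2[OF 2 aT] 3 ..
  qed
  have EH: "E * H * mat_adjoint E = H - z \<cdot>\<^sub>m (T * H) - cnj z \<cdot>\<^sub>m (H * mat_adjoint T - z \<cdot>\<^sub>m (T * H * mat_adjoint T))"
  proof -
    have 1: "E * H = H - z \<cdot>\<^sub>m (T * H)" unfolding E_def by (rule L1[OF H T])
    have 2: "H - z \<cdot>\<^sub>m (T * H) \<in> carrier_mat N N" using H TH by simp
    have 3: "(H - z \<cdot>\<^sub>m (T * H)) * mat_adjoint T = H * mat_adjoint T - z \<cdot>\<^sub>m (T * H * mat_adjoint T)"
      using H TH aT by (simp add: minus_mult_distrib_mat[of _ N N] mult_smult_assoc_mat[OF TH aT])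
    show ?thesis unfolding 1 aE L2[OF 2 aT] 3 ..
  qed
  have av: "mat_adjoint v \<in> carrier_mat q N" and au: "mat_adjoint u \<in> carrier_mat q N"
    and aa': "mat_adjoint a \<in> carrier_mat q q" using v u a by auto
  have vW: "v * mat_adjoint W = v * mat_adjoint a * mat_adjoint v - v * mat_adjoint u"
  proof -
    have "mat_adjoint W = mat_adjoint a * mat_adjoint v - mat_adjoint u"
      unfolding W_def using v a u by (simp add: adj_minus[of _ N q] adj_mult[of _ N q])
    moreover have aav: "mat_adjoint a * mat_adjoint v \<in> carrier_mat q N" using aa' av by simp
    ultimately show ?thesis
      by (simp add: mult_minus_distrib_mat[OF v aav au] assoc_mult_mat[OF v aa' av])
  qed
  have Wv: "W' * mat_adjoint v = v * mat_adjoint a * mat_adjoint v - u * mat_adjoint v"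
    unfolding W'_def using v av u aa' by (simp add: minus_mult_distrib_mat[of _ N q])
  have HTe: "(T * H) $$ (i,j) = (H * mat_adjoint T) $$ (i,j) + (v * mat_adjoint u) $$ (i,j) - (u * mat_adjoint v) $$ (i,j)"
    if "i < N" "j < N" for i j
  proof -
    have *: "(T * H - H * mat_adjoint T) $$ (i,j) = (v * mat_adjoint u - u * mat_adjoint v) $$ (i,j)"
      using HT by simp
    show ?thesis by (rule aux) (use * that T H v u in simp)
  qed
  have HTe': "row T i \<bullet> col H j = row H i \<bullet> col (mat_adjoint T) j + row v i \<bullet> col (mat_adjoint u) j - row u i \<bullet> col (mat_adjoint v) j"
    if "i < N" "j < N" for i j
    using HTe[OF that] that T H v u by simp
  have inner: "M * H * mat_adjoint M + c \<cdot>\<^sub>m (v * mat_adjoint W) + cnj c \<cdot>\<^sub>m (W' * mat_adjoint v) = E * H * mat_adjoint E"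
    unfolding MH EH vW Wv cc
  proof (rule eq_matI)
    fix i j assume "i < dim_row (H - z \<cdot>\<^sub>m (T * H) - cnj z \<cdot>\<^sub>m (H * mat_adjoint T - z \<cdot>\<^sub>m (T * H * mat_adjoint T)))"
      "j < dim_col (H - z \<cdot>\<^sub>m (T * H) - cnj z \<cdot>\<^sub>m (H * mat_adjoint T - z \<cdot>\<^sub>m (T * H * mat_adjoint T)))"
    then have ij: "i < N" "j < N" using H T by auto
    show "(H - cnj z \<cdot>\<^sub>m (T * H) - z \<cdot>\<^sub>m (H * mat_adjoint T - cnj z \<cdot>\<^sub>m (T * H * mat_adjoint T)) +
          c \<cdot>\<^sub>m (v * mat_adjoint a * mat_adjoint v - v * mat_adjoint u) +
          - c \<cdot>\<^sub>m (v * mat_adjoint a * mat_adjoint v - u * mat_adjoint v)) $$ (i, j) =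
         (H - z \<cdot>\<^sub>m (T * H) - cnj z \<cdot>\<^sub>m (H * mat_adjoint T - z \<cdot>\<^sub>m (T * H * mat_adjoint T))) $$ (i, j)"
      using ij H T v u a by (simp add: HTe' c_def algebra_simps)
  qed (use H T v u in auto)
  have aA: "mat_adjoint A \<in> carrier_mat N N" and aD: "mat_adjoint D \<in> carrier_mat q N"
    and aB: "mat_adjoint B \<in> carrier_mat q N" and aB': "mat_adjoint B' \<in> carrier_mat q N"
    using A D B B' by auto
  have Z: "0\<^sub>m q N \<in> carrier_mat q N" and Z': "0\<^sub>m N q \<in> carrier_mat N q" and I: "1\<^sub>m q \<in> carrier_mat q q" by auto
  have AH: "A * H \<in> carrier_mat N N" using A H by simp
  have DaB: "D * mat_adjoint B \<in> carrier_mat N N" using D aB by simp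
  have TL0: "A * H + D * mat_adjoint B \<in> carrier_mat N N" using DaB by simp
  have XP: "four_block_mat A D (0\<^sub>m q N) (1\<^sub>m q) * four_block_mat H B (mat_adjoint B) C
     = four_block_mat (A * H + D * mat_adjoint B) B' (mat_adjoint B) C"
    unfolding mult_four_block_mat[OF A D Z I H B aB C] TR[symmetric]
    using H B aB C by simp
  have aX: "mat_adjoint (four_block_mat A D (0\<^sub>m q N) (1\<^sub>m q)) = four_block_mat (mat_adjoint A) (0\<^sub>m N q) (mat_adjoint D) (1\<^sub>m q)"
    by (simp add: adj_four[OF A D Z I])
  have XPX: "four_block_mat (A * H + D * mat_adjoint B) B' (mat_adjoint B) C * four_block_mat (mat_adjoint A) (0\<^sub>m N q) (mat_adjoint D) (1\<^sub>m q)
    = four_block_mat ((A * H + D * mat_adjoint B) * mat_adjoint A + B' * mat_adjoint D) B'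
        (mat_adjoint B * mat_adjoint A + C * mat_adjoint D) C"
    unfolding mult_four_block_mat[OF TL0 B' aB C aA Z' aD I]
    using TL0 B' aB C D by simp
  have BL: "mat_adjoint B * mat_adjoint A + C * mat_adjoint D = mat_adjoint B'"
  proof -
    have "mat_adjoint B' = mat_adjoint (A * B) + mat_adjoint (D * C)"
      unfolding TR[symmetric] using A B D C by (simp add: adj_add[of _ N q])
    also have "\<dots> = mat_adjoint B * mat_adjoint A + C * mat_adjoint D"
      by (simp add: adj_mult[OF A B] adj_mult[OF D C] Cadj)
    finally show ?thesis by simp
  qed
  have TLe: "(A * H + D * mat_adjoint B) * mat_adjoint A + B' * mat_adjoint D = H"
  proof -
    have 1: "(A * H + D * mat_adjoint B) * mat_adjoint A = A * H * mat_adjoint A + D * mat_adjoint (R1 * W)"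
    proof -
      have "(A * H + D * mat_adjoint B) * mat_adjoint A = A * H * mat_adjoint A + D * mat_adjoint B * mat_adjoint A"
        by (rule add_mult_distrib_mat[OF AH DaB aA])
      also have "D * mat_adjoint B * mat_adjoint A = D * mat_adjoint (A * B)"
        by (simp add: assoc_mult_mat[OF D aB aA] adj_mult[OF A B])
      finally show ?thesis unfolding AB .
    qed
    have 2: "A * H * mat_adjoint A = R1 * (M * H * mat_adjoint M) * mat_adjoint R1"
      unfolding A_def by (rule S1[OF R1 M H])
    have 3: "D * mat_adjoint (R1 * W) = R1 * (c \<cdot>\<^sub>m (v * mat_adjoint W)) * mat_adjoint R1"
      unfolding D_def by (rule S2[OF R1 v W])
    have 4: "B' * mat_adjoint D = R1 * (cnj c \<cdot>\<^sub>m (W' * mat_adjoint v)) * mat_adjoint R1"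
      unfolding D_def B'_def by (rule S3[OF R1 v W'])
    have MHM: "M * H * mat_adjoint M \<in> carrier_mat N N" using M H by simp
    have cvW: "c \<cdot>\<^sub>m (v * mat_adjoint W) \<in> carrier_mat N N" using v W by simp
    have cWv: "cnj c \<cdot>\<^sub>m (W' * mat_adjoint v) \<in> carrier_mat N N" using v W' by simp
    have "(A * H + D * mat_adjoint B) * mat_adjoint A + B' * mat_adjoint D
      = R1 * (E * H * mat_adjoint E) * mat_adjoint R1"
      unfolding 1 2 3 4 S4[OF R1 MHM cvW cWv] inner ..
    also have "\<dots> = R1 * E * H * mat_adjoint (R1 * E)" by (rule S1[OF R1 E H, symmetric])
    also have "R1 * E = 1\<^sub>m N" using R1E by (simp add: E_def)
    finally show ?thesis using H by simp
  qed
  have main: "four_block_mat H B' (mat_adjoint B') C =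
     four_block_mat A D (0\<^sub>m q N) (1\<^sub>m q) * four_block_mat H B (mat_adjoint B) C * mat_adjoint (four_block_mat A D (0\<^sub>m q N) (1\<^sub>m q))"
    unfolding XP aX XPX BL TLe ..
  show ?thesis unfolding C' using main
    unfolding A_def M_def D_def c_def B'_def W'_def B_def W_def C_def .
qed

lemma blockmat_index[simp]: "i < r * q \<Longrightarrow> j < c * q \<Longrightarrow>
  blockmat r c q B $$ (i,j) = B (i div q) (j div q) $$ (i mod q, j mod q)"
  unfolding blockmat_def by simp

lemma blockmat_carrier[simp]: "blockmat r c q B \<in> carrier_mat (r*q) (c*q)"
  unfolding blockmat_def by simp

lemma blockmat_dim[simp]: "dim_row (blockmat r c q B) = r * q" "dim_col (blockmat r c q B) = c * q"
  unfolding blockmat_def by simp_all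

lemma idx_aux: assumes q: "0 < (q::nat)"
  shows "(i div q = k div q + 1 \<and> i mod q = k mod q) = (k + q = i)"
proof
  assume h: "i div q = k div q + 1 \<and> i mod q = k mod q"
  have "i = (i div q) * q + i mod q" by simp
  also have "\<dots> = (k div q) * q + k mod q + q" using h by (simp add: algebra_simps)
  also have "\<dots> = k + q" by simp
  finally show "k + q = i" by simp
next
  assume "k + q = i"
  then show "i div q = k div q + 1 \<and> i mod q = k mod q" using q by auto
qed

lemma Tmat_index: assumes "i < (n+1)*q" "k < (n+1)*q"
  shows "Tmat q n $$ (i,k) = (if k + q = i then 1 else 0)"
proof -
  have q: "0 < q" using assms by (cases q) auto
  have "i mod q < q" "k mod q < q" using q by auto
  then show ?thesis unfolding Tmat_def using assms idx_aux[OF q, of i k]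
    by (auto simp: one_mat_def)
qed

lemma Tmat_carrier[simp]: "Tmat q n \<in> carrier_mat ((n+1)*q) ((n+1)*q)"
  unfolding Tmat_def by (rule blockmat_carrier)

lemma Tmat_dim[simp]: "dim_row (Tmat q n) = (n+1)*q" "dim_col (Tmat q n) = (n+1)*q"
  using Tmat_carrier[of q n] unfolding carrier_mat_def by auto

lemma ShL: assumes M: "M \<in> carrier_mat ((n+1)*q) m" and i: "i < (n+1)*q" and j: "j < m"
  shows "(Tmat q n * M) $$ (i,j) = (if i < q then 0 else M $$ (i-q, j))"
proof -
  let ?N = "(n+1)*q"
  have "(Tmat q n * M) $$ (i,j) = (\<Sum>k\<in>{0..<?N}. Tmat q n $$ (i,k) * M $$ (k,j))"
    using M i j by (simp add: scalar_prod_def)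
  also have "\<dots> = (\<Sum>k\<in>{0..<?N}. if k = i - q \<and> q \<le> i then M $$ (k,j) else 0)"
    by (rule sum.cong) (use i in \<open>auto simp: Tmat_index\<close>)
  also have "\<dots> = (if i < q then 0 else M $$ (i-q, j))"
    using i by (auto simp: sum.delta)
  finally show ?thesis .
qed

lemma ShR: assumes M: "M \<in> carrier_mat m ((n+1)*q)" and i: "i < m" and j: "j < (n+1)*q"
  shows "(M * mat_adjoint (Tmat q n)) $$ (i,j) = (if j < q then 0 else M $$ (i, j-q))"
proof -
  have "M * mat_adjoint (Tmat q n) = mat_adjoint (Tmat q n * mat_adjoint M)"
    using M by (simp add: adj_mult[OF Tmat_carrier adj_carrierI[OF M]])
  also have "\<dots> $$ (i,j) = cnj ((Tmat q n * mat_adjoint M) $$ (j,i))"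
    using M i j by simp
  also have "\<dots> = (if j < q then 0 else M $$ (i, j-q))"
    using M i j by (subst ShL[of _ n q m]) auto
  finally show ?thesis .
qed

lemma vmat_carrier[simp]: "vmat q n \<in> carrier_mat ((n+1)*q) q"
  unfolding vmat_def using blockmat_carrier[of "n+1" 1 q] by simp

lemma vmat_dim[simp]: "dim_row (vmat q n) = (n+1)*q" "dim_col (vmat q n) = q"
  using vmat_carrier[of q n] unfolding carrier_mat_def by auto

lemma vmat_index: assumes "i < (n+1)*q" "k < q"
  shows "vmat q n $$ (i,k) = (if i = k then 1 else 0)"
proof -
  have "i mod q < q" using assms by auto
  moreover have "i div q = 0 \<Longrightarrow> i mod q = i" by (metis add_0 div_mult_mod_eq mult_zero_left)
  moreover have "i div q = 0 \<Longrightarrow> i < q" using \<open>i mod q < q\<close> by (metis add_0 div_mult_mod_eq mult_zero_left)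
  ultimately show ?thesis unfolding vmat_def using assms
    by (auto simp: one_mat_def)
qed

lemma vL: assumes K: "K \<in> carrier_mat q m" and i: "i < (n+1)*q" and j: "j < m"
  shows "(vmat q n * K) $$ (i,j) = (if i < q then K $$ (i, j) else 0)"
proof -
  have "(vmat q n * K) $$ (i,j) = (\<Sum>k\<in>{0..<q}. vmat q n $$ (i,k) * K $$ (k,j))"
    using K i j by (simp add: scalar_prod_def)
  also have "\<dots> = (\<Sum>k\<in>{0..<q}. if k = i then K $$ (k,j) else 0)"
    by (rule sum.cong) (use i in \<open>auto simp: vmat_index\<close>)
  also have "\<dots> = (if i < q then K $$ (i, j) else 0)"
    by (auto simp: sum.delta)
  finally show ?thesis .
qed

lemma vR: assumes K: "K \<in> carrier_mat m q" and i: "i < m" and j: "j < (n+1)*q"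
  shows "(K * mat_adjoint (vmat q n)) $$ (i,j) = (if j < q then K $$ (i, j) else 0)"
proof -
  have "K * mat_adjoint (vmat q n) = mat_adjoint (vmat q n * mat_adjoint K)"
    using K by (simp add: adj_mult[OF vmat_carrier adj_carrierI[OF K]])
  also have "\<dots> $$ (i,j) = cnj ((vmat q n * mat_adjoint K) $$ (j,i))"
    using K i j by simp
  also have "\<dots> = (if j < q then K $$ (i, j) else 0)"
    using K i j by (subst vL[of _ q m]) auto
  finally show ?thesis .
qed

lemma dm: assumes "q \<le> (i::nat)" shows "(i - q) div q = i div q - 1" "(i - q) mod q = i mod q"
proof -
  obtain k where i: "i = k + q" using assms by (metis le_add_diff_inverse2)
  show "(i - q) div q = i div q - 1" unfolding i by (cases "q = 0") simp_all
  show "(i - q) mod q = i mod q" unfolding i by simp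
qed

lemma herm_idx: "X \<in> carrier_mat q q \<Longrightarrow> mat_adjoint X = X \<Longrightarrow> a < q \<Longrightarrow> b < q \<Longrightarrow>
  cnj (X $$ (a,b)) = X $$ (b,a)"
proof -
  assume X: "X \<in> carrier_mat q q" and h: "mat_adjoint X = X" and ab: "a < q" "b < q"
  have "X $$ (b,a) = mat_adjoint X $$ (b,a)" using h by simp
  also have "\<dots> = cnj (X $$ (a,b))" using X ab by simp
  finally show ?thesis by simp
qed

lemma hankel:
  fixes t :: "nat \<Rightarrow> complex mat" and w :: "complex mat"
  assumes t: "\<forall>j < n. t j \<in> carrier_mat q q \<and> mat_adjoint (t j) = t j"
    and w: "w \<in> carrier_mat q q" "mat_adjoint w = w"
  shows "Tmat q n * blockmat (n+1) (n+1) q (\<lambda>j k. t (j+k))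
       - blockmat (n+1) (n+1) q (\<lambda>j k. t (j+k)) * mat_adjoint (Tmat q n)
     = vmat q n * mat_adjoint (blockmat (n+1) 1 q (\<lambda>j _. - (if j = 0 then w else t (j-1))))
       - blockmat (n+1) 1 q (\<lambda>j _. - (if j = 0 then w else t (j-1))) * mat_adjoint (vmat q n)"
    (is "Tmat q n * ?H - ?H * _ = vmat q n * mat_adjoint ?U - ?U * _")
proof -
  let ?N = "(n+1)*q"
  have Hc: "?H \<in> carrier_mat ?N ?N" by (rule blockmat_carrier)
  have Uc: "?U \<in> carrier_mat ?N q" using blockmat_carrier[of "n+1" 1 q] by simp
  have aUc: "mat_adjoint ?U \<in> carrier_mat q ?N" using Uc by simp
  define X where "X i = (if i div q = 0 then w else t (i div q - 1))" for i
  have Xc: "X i \<in> carrier_mat q q \<and> mat_adjoint (X i) = X i" if "i < ?N" for i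
  proof (cases "i div q = 0")
    case False
    have "i div q < n + 1" using that by (rule less_mult_imp_div_less)
    then have "i div q - 1 < n" using False by simp
    then have "t (i div q - 1) \<in> carrier_mat q q \<and> mat_adjoint (t (i div q - 1)) = t (i div q - 1)"
      using t by blast
    moreover have "X i = t (i div q - 1)" using False by (simp add: X_def)
    ultimately show ?thesis by simp
  next
    case True
    then have "X i = w" by (simp add: X_def)
    then show ?thesis using w by simp
  qed
  have Ui: "?U $$ (i,j) = - (X i $$ (i mod q, j))" if "i < ?N" "j < q" for i j
  proof -
    have m: "i mod q < q" using that by auto
    have "?U $$ (i,j) = (- X i) $$ (i mod q, j mod q)"
      using that blockmat_index[of i "n+1" q j 1] by (simp add: X_def)
    also have "\<dots> = - (X i $$ (i mod q, j))" using that m Xc[OF that(1)] by (subst index_uminus_mat(1)) auto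
    finally show ?thesis .
  qed
  have Hi: "?H $$ (i,j) = t (i div q + j div q) $$ (i mod q, j mod q)" if "i < ?N" "j < ?N" for i j
    using that by simp
  show ?thesis
  proof (rule eq_matI)
    fix i j assume "i < dim_row (vmat q n * mat_adjoint ?U - ?U * mat_adjoint (vmat q n))"
      "j < dim_col (vmat q n * mat_adjoint ?U - ?U * mat_adjoint (vmat q n))"
    then have i: "i < ?N" and j: "j < ?N" using Uc by auto
    have L: "(Tmat q n * ?H - ?H * mat_adjoint (Tmat q n)) $$ (i,j)
       = (if i < q then 0 else ?H $$ (i-q, j)) - (if j < q then 0 else ?H $$ (i, j-q))"
    proof -
      have "(Tmat q n * ?H - ?H * mat_adjoint (Tmat q n)) $$ (i,j) = (Tmat q n * ?H) $$ (i,j) - (?H * mat_adjoint (Tmat q n)) $$ (i,j)"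
        using i j Hc by (intro index_minus_mat(1)) auto
      then show ?thesis by (simp only: ShL[OF Hc i j] ShR[OF Hc i j])
    qed
    have R: "(vmat q n * mat_adjoint ?U - ?U * mat_adjoint (vmat q n)) $$ (i,j)
       = (if i < q then cnj (?U $$ (j,i)) else 0) - (if j < q then ?U $$ (i, j) else 0)"
    proof -
      have "(vmat q n * mat_adjoint ?U - ?U * mat_adjoint (vmat q n)) $$ (i,j) = (vmat q n * mat_adjoint ?U) $$ (i,j) - (?U * mat_adjoint (vmat q n)) $$ (i,j)"
        using i j Uc by (intro index_minus_mat(1)) auto
      then have e: "(vmat q n * mat_adjoint ?U - ?U * mat_adjoint (vmat q n)) $$ (i,j) = (if i < q then mat_adjoint ?U $$ (i, j) else 0) - (if j < q then ?U $$ (i, j) else 0)"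
        by (simp only: vL[OF aUc i j] vR[OF Uc i j])
      have "mat_adjoint ?U $$ (i, j) = cnj (?U $$ (j,i))" if "i < q" using that j Uc by simp
      with e show ?thesis by (cases "i < q") simp_all

    qed
    have qp: "0 < q" using i by (cases q) auto
    have imq: "i mod q < q" "j mod q < q" using qp by auto
    have iq: "i < q \<Longrightarrow> i mod q = i \<and> i div q = 0" "j < q \<Longrightarrow> j mod q = j \<and> j div q = 0" by auto
    show "(Tmat q n * ?H - ?H * mat_adjoint (Tmat q n)) $$ (i,j) = (vmat q n * mat_adjoint ?U - ?U * mat_adjoint (vmat q n)) $$ (i,j)"
    proof (cases "i < q"; cases "j < q")
      assume a: "i < q" "j < q"
      show "?thesis" unfolding L R using a Ui[OF i] Ui[OF j] Xc[OF i] Xc[OF j] herm_idx[of "X j" q j i] iq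
        by (simp add: X_def)
    next
      assume a: "i < q" "\<not> j < q"
      have jd: "j div q \<noteq> 0" using a qp by (simp add: div_greater_zero_iff)
      have "?H $$ (i, j - q) = t (j div q - 1) $$ (i, j mod q)"
        using Hi[of i "j-q"] a i j dm[of q j] iq by simp
      moreover have "?U $$ (j,i) = - (t (j div q - 1) $$ (j mod q, i))"
        using Ui[OF j a(1)] a jd by (simp add: X_def)
      moreover have "cnj (t (j div q - 1) $$ (j mod q, i)) = t (j div q - 1) $$ (i, j mod q)"
        using Xc[OF j] a herm_idx[of "X j" q "j mod q" i] imq jd by (simp add: X_def)
      ultimately show ?thesis unfolding L R using a by simp
    next
      assume a: "\<not> i < q" "j < q"
      have id: "i div q \<noteq> 0" using a qp by (simp add: div_greater_zero_iff)
      have "?H $$ (i - q, j) = t (i div q - 1) $$ (i mod q, j)"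
        using Hi[of "i-q" j] a i j dm[of q i] iq by simp
      moreover have "?U $$ (i,j) = - (t (i div q - 1) $$ (i mod q, j))"
        using Ui[OF i a(2)] a id by (simp add: X_def)
      ultimately show ?thesis unfolding L R using a by simp
    next
      assume a: "\<not> i < q" "\<not> j < q"
      have "i div q \<noteq> 0" "j div q \<noteq> 0" using a qp by (simp_all add: div_greater_zero_iff)
      then have "?H $$ (i - q, j) = ?H $$ (i, j - q)"
        using Hi[of "i-q" j] Hi[of i "j-q"] a i j dm[of q i] dm[of q j] by simp
      then show ?thesis unfolding L R using a by simp
    qed
  qed (use Uc in auto)
qed

lemma RT_props:
  shows "RT q n z \<in> carrier_mat ((n+1)*q) ((n+1)*q) \<and>
    RT q n z * (1\<^sub>m ((n+1)*q) - z \<cdot>\<^sub>m Tmat q n) = 1\<^sub>m ((n+1)*q) \<and>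
    (1\<^sub>m ((n+1)*q) - z \<cdot>\<^sub>m Tmat q n) * RT q n z = 1\<^sub>m ((n+1)*q)"
proof -
  define N where "N = (n+1)*q"
  define A where "A = 1\<^sub>m N - z \<cdot>\<^sub>m Tmat q n"
  have T: "Tmat q n \<in> carrier_mat N N" unfolding N_def by (rule Tmat_carrier)
  have A: "A \<in> carrier_mat N N" using T by (simp add: A_def)
  have Aij: "A $$ (i,j) = (if i = j then 1 else 0) - z * (if j + q = i then 1 else 0)" if "i < N" "j < N" for i j
    using that by (simp add: A_def N_def Tmat_index)
  have "det A = prod_list (diag_mat A)"
    by (rule det_lower_triangular[OF _ A]) (simp add: Aij)
  also have "diag_mat A = replicate N 1"
  proof -
    have "diag_mat A = map (\<lambda>i. A $$ (i,i)) [0..<N]" using A by (simp add: diag_mat_def)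
    also have "\<dots> = map (\<lambda>i. 1) [0..<N]" by (rule map_cong) (auto simp: Aij N_def)
    finally show ?thesis by (simp add: map_replicate_const)
  qed
  finally have "det A \<noteq> 0" by simp
  from det_non_zero_imp_unit[OF A this] have U: "A \<in> Units (ring_mat TYPE(complex) N N)" .
  have "mat_inverse A \<noteq> None"
  proof
    assume "mat_inverse A = None"
    from mat_inverse(1)[OF A this, of N] U show False by simp
  qed
  then obtain B where B: "mat_inverse A = Some B" by auto
  from mat_inverse(2)[OF A B] have "A * B = 1\<^sub>m N \<and> B * A = 1\<^sub>m N \<and> B \<in> carrier_mat N N" .
  moreover have "RT q n z = B" unfolding RT_def using B by (simp add: A_def N_def)
  ultimately show ?thesis by (simp add: A_def N_def)
qed

lemma cnj_divide_swap: "(x - y) / (w1 - w2) = (y - x) / (w2 - w1)" for x y w1 w2 :: complex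
  by (metis minus_diff_eq minus_divide_divide)

theorem lemma4p8:
  fixes \<alpha> :: real and \<kappa> :: enat and q :: nat and s :: "nat \<Rightarrow> complex mat"
    and G :: "complex set" and f :: "complex \<Rightarrow> complex mat" and k :: int and z :: complex
  assumes s: "\<forall>j. enat j \<le> \<kappa> \<longrightarrow> s j \<in> carrier_mat q q \<and> mat_adjoint (s j) = s j"
    and G: "G - \<real> \<noteq> {}"
    and f: "\<forall>w\<in>G. f w \<in> carrier_mat q q"
    and k: "-1 \<le> k" "k = -1 \<or> enat (nat k) \<le> \<kappa>"
    and z: "z \<in> Gvee G - \<real>"
  shows "\<exists>X \<in> carrier_mat (dimP q k) (dimP q k).
           Pmat q \<alpha> s (fvee f) k z = X * Pmat q \<alpha> s f k (cnj z) * mat_adjoint X"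
proof -
  have zG: "cnj z \<in> G" using z by (simp add: Gvee_def)
  have zr: "z \<noteq> cnj z"
  proof
    assume "z = cnj z"
    then have "Im z = 0" by (metis cnj.sel(2) neg_equal_zero)
    then have "z \<in> \<real>" by (simp add: complex_is_Real_iff)
    then show False using z by simp
  qed
  define a where "a = f (cnj z)"
  have a: "a \<in> carrier_mat q q" using f zG by (simp add: a_def)
  have fv: "fvee f z = mat_adjoint a" by (simp add: fvee_def a_def)
  show ?thesis
  proof (cases "k = -1")
    case True
    have dim: "dimP q k = q" using True by (simp add: dimP_def)
    have P1: "Pmat q \<alpha> s (fvee f) k z = (1 / (z - cnj z)) \<cdot>\<^sub>m ((z - complex_of_real \<alpha>) \<cdot>\<^sub>m mat_adjoint a
         - mat_adjoint ((z - complex_of_real \<alpha>) \<cdot>\<^sub>m mat_adjoint a))"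
      using True by (simp add: Pmat_def fv)
    have P2: "Pmat q \<alpha> s f k (cnj z) = (1 / (cnj z - z)) \<cdot>\<^sub>m ((cnj z - complex_of_real \<alpha>) \<cdot>\<^sub>m a
         - mat_adjoint ((cnj z - complex_of_real \<alpha>) \<cdot>\<^sub>m a))"
      using True by (simp add: Pmat_def a_def)
    have eq: "Pmat q \<alpha> s (fvee f) k z = Pmat q \<alpha> s f k (cnj z)"
      unfolding P1 P2
      by (rule eq_matI) (use a in \<open>auto simp: adj_smult cnj_divide_swap\<close>)
    have Pc: "Pmat q \<alpha> s f k (cnj z) \<in> carrier_mat q q" unfolding P2 using a by simp
    show ?thesis
      by (rule bexI[of _ "1\<^sub>m q"]) (use eq Pc dim in simp_all)
  next
    case False
    then have k0: "0 \<le> k" "enat (nat k) \<le> \<kappa>" using k by auto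
    define n where "n = nat k div 2"
    define N where "N = (n+1)*q"
    have T: "Tmat q n \<in> carrier_mat N N" unfolding N_def by (rule Tmat_carrier)
    have v: "vmat q n \<in> carrier_mat N q" unfolding N_def by (rule vmat_carrier)
    have R1: "RT q n z \<in> carrier_mat N N" "RT q n z * (1\<^sub>m N - z \<cdot>\<^sub>m Tmat q n) = 1\<^sub>m N"
      using RT_props[of q n z] unfolding N_def by auto
    have R2: "RT q n (cnj z) \<in> carrier_mat N N" "(1\<^sub>m N - cnj z \<cdot>\<^sub>m Tmat q n) * RT q n (cnj z) = 1\<^sub>m N"
      using RT_props[of q n "cnj z"] unfolding N_def by auto
    have dim: "dimP q k = N + q" using False by (simp add: dimP_def N_def n_def algebra_simps)
    have sj: "s j \<in> carrier_mat q q \<and> mat_adjoint (s j) = s j" if "j \<le> nat k" for j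
      using s k0(2) that by (meson enat_ord_simps(1) order_trans)
    show ?thesis
    proof (cases "even k")
      case True
      have nk: "2 * n \<le> nat k" by (simp add: n_def)
      define H where "H = Hmat q s n"
      define u where "u = umat q s n"
      have H: "H \<in> carrier_mat N N" unfolding H_def Hmat_def N_def by (rule blockmat_carrier)
      have u: "u \<in> carrier_mat N q" unfolding u_def umat_def N_def using blockmat_carrier[of "n+1" 1 q] by simp
      have HT: "Tmat q n * H - H * mat_adjoint (Tmat q n) = vmat q n * mat_adjoint u - u * mat_adjoint (vmat q n)"
        unfolding H_def Hmat_def u_def umat_def sprev_def
        by (rule hankel) (use sj nk in auto)
      note K = key[OF H T R1(1) R2(1) v u a R1(2) R2(2) HT zr]
      have P1: "Pmat q \<alpha> s (fvee f) k z = four_block_mat H (RT q n z * (vmat q n * mat_adjoint a - u))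
        (mat_adjoint (RT q n z * (vmat q n * mat_adjoint a - u))) ((1 / (z - cnj z)) \<cdot>\<^sub>m (mat_adjoint a - a))"
        using True False by (simp add: Pmat_def fv H_def u_def n_def Let_def)
      have P2: "Pmat q \<alpha> s f k (cnj z) = four_block_mat H (RT q n (cnj z) * (vmat q n * a - u))
        (mat_adjoint (RT q n (cnj z) * (vmat q n * a - u))) ((1 / (cnj z - z)) \<cdot>\<^sub>m (a - mat_adjoint a))"
        using True False by (simp add: Pmat_def a_def H_def u_def n_def Let_def)
      have Xc: "four_block_mat (RT q n z * (1\<^sub>m N - cnj z \<cdot>\<^sub>m Tmat q n)) ((z - cnj z) \<cdot>\<^sub>m (RT q n z * vmat q n)) (0\<^sub>m q N) (1\<^sub>m q)
        \<in> carrier_mat (N + q) (N + q)"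
        using R1(1) T v by (intro four_block_carrier_mat) auto
      show ?thesis unfolding P1 P2 dim using K Xc by blast
    next
      case odd: False
      have "odd (nat k)" using odd k0 by (simp add: even_nat_iff)
      then have nk: "2 * n + 1 \<le> nat k" unfolding n_def by (simp add: odd_two_times_div_two_succ)
      define H where "H = Halpha q \<alpha> s n"
      define u where "u = (- complex_of_real \<alpha>) \<cdot>\<^sub>m umat q s n - y0 q s n"
      define b where "b = (cnj z - complex_of_real \<alpha>) \<cdot>\<^sub>m a"
      have b: "b \<in> carrier_mat q q" using a by (simp add: b_def)
      have fvb: "(z - complex_of_real \<alpha>) \<cdot>\<^sub>m fvee f z = mat_adjoint b"
        by (simp add: b_def fv adj_smult)
      have H: "H \<in> carrier_mat N N" unfolding H_def Halpha_def N_def by (rule blockmat_carrier)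
      have uU: "u = blockmat (n+1) 1 q (\<lambda>j _. - (if j = 0 then s 0 else salpha \<alpha> s (j-1)))"
      proof (rule eq_matI)
        show "dim_row u = dim_row (blockmat (n+1) 1 q (\<lambda>j _. - (if j = 0 then s 0 else salpha \<alpha> s (j-1))))"
          by (simp add: u_def umat_def y0_def)
        show "dim_col u = dim_col (blockmat (n+1) 1 q (\<lambda>j _. - (if j = 0 then s 0 else salpha \<alpha> s (j-1))))"
          by (simp add: u_def umat_def y0_def)
        fix i j assume ij: "i < dim_row (blockmat (n+1) 1 q (\<lambda>j _. - (if j = 0 then s 0 else salpha \<alpha> s (j-1))))"
          "j < dim_col (blockmat (n+1) 1 q (\<lambda>j _. - (if j = 0 then s 0 else salpha \<alpha> s (j-1))))"
        then have i: "i < (n+1)*q" and j: "j < q" by auto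
        have qp: "0 < q" using j by simp
        have im: "i mod q < q" using qp by simp
        have "i div q < n + 1" using i by (rule less_mult_imp_div_less)
        then have idn: "i div q \<le> n" by simp
        have sd: "s (i div q) \<in> carrier_mat q q" using sj[of "i div q"] idn nk by simp
        have sd1: "s (i div q - 1) \<in> carrier_mat q q" using sj[of "i div q - 1"] idn nk by simp
        have jm: "j mod q = j" "j div q = 0" using j by auto
        show "u $$ (i,j) = blockmat (n+1) 1 q (\<lambda>j _. - (if j = 0 then s 0 else salpha \<alpha> s (j-1))) $$ (i,j)"
          using i j im sd sd1 jm
          by (auto simp: u_def umat_def y0_def sprev_def salpha_def blockmat_index[of i "n+1" q j 1])
      qed
      have u: "u \<in> carrier_mat N q" unfolding uU N_def using blockmat_carrier[of "n+1" 1 q] by simp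
      have sa: "salpha \<alpha> s j \<in> carrier_mat q q \<and> mat_adjoint (salpha \<alpha> s j) = salpha \<alpha> s j" if "j < n" for j
      proof -
        have 1: "s j \<in> carrier_mat q q \<and> mat_adjoint (s j) = s j" using sj[of j] that nk by simp
        have 2: "s (j+1) \<in> carrier_mat q q \<and> mat_adjoint (s (j+1)) = s (j+1)" using sj[of "j+1"] that nk by simp
        show ?thesis using 1 2 unfolding salpha_def
          by (simp add: adj_add[of _ q q] adj_smult)
      qed
      have HT: "Tmat q n * H - H * mat_adjoint (Tmat q n) = vmat q n * mat_adjoint u - u * mat_adjoint (vmat q n)"
        unfolding H_def Halpha_def uU
        by (rule hankel) (use sa sj in auto)
      note K = key[OF H T R1(1) R2(1) v u b R1(2) R2(2) HT zr]
      have P1: "Pmat q \<alpha> s (fvee f) k z = four_block_mat H (RT q n z * (vmat q n * mat_adjoint b - u))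
        (mat_adjoint (RT q n z * (vmat q n * mat_adjoint b - u))) ((1 / (z - cnj z)) \<cdot>\<^sub>m (mat_adjoint b - b))"
        using odd False by (simp add: Pmat_def fvb H_def u_def n_def Let_def)
      have P2: "Pmat q \<alpha> s f k (cnj z) = four_block_mat H (RT q n (cnj z) * (vmat q n * b - u))
        (mat_adjoint (RT q n (cnj z) * (vmat q n * b - u))) ((1 / (cnj z - z)) \<cdot>\<^sub>m (b - mat_adjoint b))"
        using odd False by (simp add: Pmat_def a_def b_def H_def u_def n_def Let_def)
      have Xc: "four_block_mat (RT q n z * (1\<^sub>m N - cnj z \<cdot>\<^sub>m Tmat q n)) ((z - cnj z) \<cdot>\<^sub>m (RT q n z * vmat q n)) (0\<^sub>m q N) (1\<^sub>m q)
        \<in> carrier_mat (N + q) (N + q)"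
        using R1(1) T v by (intro four_block_carrier_mat) auto
      show ?thesis unfolding P1 P2 dim using K Xc by blast
    qed
  qed
qed

end
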